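(* Let $\mathbf D_0\in\mathcal D$. For any $\mathbf W\in\mathcal W_{\mathbf D_0}$, $\mathbf v\in\mathcal S^p$, $t\ge0$ and $J\subseteq\{1,\dots,p\}$, writing $\mathbf D(t)=\mathbf D(\mathbf W,\mathbf v,t)$, $$|||[\mathbf D(t)-\mathbf D_0]_J|||_2^2\le\|[\mathbf D(t)-\mathbf D_0]_J\|_F^2\le t^2\|\mathbf v_J\|_2^2,$$ $$|||(\mathbf I-\mathbf P_J(t))[\mathbf D_0]_J|||_2^2\le\|(\mathbf I-\mathbf P_J(t))[\mathbf D_0]_J\|_F^2\le t^2\|\mathbf v_J\|_2^2.$$
   Context: $\mathcal D$: real $m\times p$ matrices with unit $\ell_2$-norm columns; $\mathcal S^p$: unit sphere of $\mathbb R^p$; $\mathcal W_{\mathbf D_0}=\{\mathbf W:\mathrm{diag}(\mathbf W^\top\mathbf D_0)=\mathbf 0,\mathrm{diag}(\mathbf W^\top\mathbf W)=\mathbf 1\}$; $\mathbf D(\mathbf W,\mathbf v,t)=\mathbf D_0\mathrm{Diag}[\cos(\mathbf vt)]+\mathbf W\mathrm{Diag}[\sin(\mathbf vt)]$. For a matrix $\mathbf M$, $\mathbf M_J$ is the submatrix of columns indexed by $J$, and $\mathbf v_J$ the subvector. $\mathbf P_J(t)\in\mathbb R^{m\times m}$ is the orthogonal projector onto the span of the columns of $[\mathbf D(t)]_J$. $|||\cdot|||_2$ spectral norm. *)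

theory Defs
  imports "HOL-Analysis.Analysis"
begin

text \<open>Matrices are \<open>real^'p^'m\<close> (m rows indexed by 'm, p columns indexed by 'p).\<close>

definition Dcurve :: "real^'p^'m \<Rightarrow> real^'p^'m \<Rightarrow> real^'p \<Rightarrow> real \<Rightarrow> real^'p^'m" where
  "Dcurve D0 W v t = (\<chi> i k. D0$i$k * cos (v$k * t) + W$i$k * sin (v$k * t))"

text \<open>Column restriction M_J: columns outside J are replaced by zero columns
  (same spectral and Frobenius norm as the m x |J| submatrix).\<close>
definition colrestrict :: "'p set \<Rightarrow> real^'p^'m \<Rightarrow> real^'p^'m" where
  "colrestrict J A = (\<chi> i k. if k \<in> J then A$i$k else 0)"

definition vrestrict :: "'p set \<Rightarrow> real^'p \<Rightarrow> real^'p" where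
  "vrestrict J v = (\<chi> k. if k \<in> J then v$k else 0)"

definition spec_norm :: "real^'n^'m \<Rightarrow> real" where
  "spec_norm A = onorm (\<lambda>x. A *v x)"

definition frob_norm :: "real^'n^'m \<Rightarrow> real" where
  "frob_norm A = sqrt (\<Sum>i\<in>UNIV. \<Sum>j\<in>UNIV. (A$i$j)^2)"

definition orth_proj :: "'a::euclidean_space set \<Rightarrow> 'a \<Rightarrow> 'a" where
  "orth_proj S x = (THE y. y \<in> span S \<and> (\<forall>z\<in>span S. inner (x - y) z = 0))"

definition proj_matrix :: "(real^'m) set \<Rightarrow> real^'m^'m" where
  "proj_matrix S = (\<chi> i j. orth_proj S (axis j 1) $ i)"

definition PJ :: "'p set \<Rightarrow> real^'p^'m \<Rightarrow> real^'m^'m" where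
  "PJ J D = proj_matrix {column k D | k. k \<in> J}"

end

theory Submission
  imports Defs
begin

lemma orth_proj_ex:
  fixes S :: "'a::euclidean_space set"
  shows "\<exists>y. y \<in> span S \<and> (\<forall>z\<in>span S. inner (x - y) z = 0)"
proof -
  obtain y z where "y \<in> span S" "\<And>w. w \<in> span S \<Longrightarrow> orthogonal z w" "x = y + z"
    using orthogonal_subspace_decomp_exists by blast
  then show ?thesis by (auto simp: orthogonal_def)
qed

lemma orth_proj_uniq:
  fixes S :: "'a::euclidean_space set"
  assumes "y1 \<in> span S" "\<forall>z\<in>span S. inner (x - y1) z = 0"
    "y2 \<in> span S" "\<forall>z\<in>span S. inner (x - y2) z = 0"
  shows "y1 = y2"
proof -
  have d: "y1 - y2 \<in> span S" using assms by (simp add: span_diff)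
  have "inner (x - y2) (y1 - y2) - inner (x - y1) (y1 - y2) = 0" using assms d by simp
  then have "inner (y1 - y2) (y1 - y2) = 0" by (simp add: inner_diff_left)
  then show ?thesis by simp
qed

lemma orth_proj_char:
  fixes S :: "'a::euclidean_space set"
  shows "orth_proj S x \<in> span S \<and> (\<forall>z\<in>span S. inner (x - orth_proj S x) z = 0)"
  unfolding orth_proj_def
  apply (rule theI')
  using orth_proj_ex[of S x] orth_proj_uniq[of _ S x] by blast

lemma orth_proj_eq:
  fixes S :: "'a::euclidean_space set"
  assumes "y \<in> span S" "\<forall>z\<in>span S. inner (x - y) z = 0"
  shows "orth_proj S x = y"
  using orth_proj_uniq[OF _ _ assms] orth_proj_char by blast

lemma orth_proj_linear:
  fixes S :: "'a::euclidean_space set"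
  shows "linear (orth_proj S)"
proof (rule linearI)
  fix x y
  show "orth_proj S (x + y) = orth_proj S x + orth_proj S y"
    apply (rule orth_proj_eq)
    using orth_proj_char[of S x] orth_proj_char[of S y]
    by (auto simp: span_add algebra_simps inner_diff_left inner_add_left)
next
  fix c :: real and x
  show "orth_proj S (c *\<^sub>R x) = c *\<^sub>R orth_proj S x"
    apply (rule orth_proj_eq)
    using orth_proj_char[of S x]
    by (auto simp: span_scale inner_diff_left inner_scaleR_left scaleR_diff_right[symmetric])
qed

lemma orth_proj_span: "y \<in> span S \<Longrightarrow> orth_proj S y = (y::'a::euclidean_space)"
  by (rule orth_proj_eq) auto

lemma orth_proj_compl_norm:
  fixes S :: "'a::euclidean_space set"
  shows "norm (x - orth_proj S x) \<le> norm x"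
proof -
  have o: "inner (x - orth_proj S x) (orth_proj S x) = 0" using orth_proj_char[of S x] by blast
  have "x = (x - orth_proj S x) + orth_proj S x" by simp
  then have "(norm x)^2 = (norm (x - orth_proj S x))^2 + (norm (orth_proj S x))^2"
    using o by (metis norm_add_Pythagorean orthogonal_def)
  then have "(norm (x - orth_proj S x))^2 \<le> (norm x)^2"
    using zero_le_power2[of "norm (orth_proj S x)"] by linarith
  then show ?thesis by (rule power2_le_imp_le) simp
qed

lemma proj_matrix_mult: "proj_matrix S *v x = orth_proj S x"
proof -
  have "proj_matrix S = matrix (orth_proj S)"
    by (simp add: proj_matrix_def matrix_def)
  then show ?thesis using matrix_works[of "orth_proj S" x] orth_proj_linear[of S]
    by (simp add: linear_matrix_vector_mul_eq)
qed

lemma norm_sq_vec: "(norm (x::real^'n))^2 = (\<Sum>i\<in>UNIV. (x$i)^2)"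
  by (simp only: power2_norm_eq_inner) (simp add: inner_vec_def power2_eq_square)

lemma frob_cols: "(frob_norm A)^2 = (\<Sum>j\<in>UNIV. (norm (column j A))^2)"
proof -
  have "(frob_norm A)^2 = (\<Sum>i\<in>UNIV. \<Sum>j\<in>UNIV. (A$i$j)^2)"
    unfolding frob_norm_def by (simp add: sum_nonneg)
  also have "\<dots> = (\<Sum>j\<in>UNIV. \<Sum>i\<in>UNIV. (A$i$j)^2)" by (rule sum.swap)
  also have "\<dots> = (\<Sum>j\<in>UNIV. (norm (column j A))^2)"
    by (simp add: norm_sq_vec column_def)
  finally show ?thesis .
qed

lemma frob_rows: "(frob_norm A)^2 = (\<Sum>i\<in>UNIV. (norm (A$i))^2)"
  unfolding frob_norm_def by (simp add: sum_nonneg norm_sq_vec)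

lemma spec_le_frob: "spec_norm (A::real^'n^'m) \<le> frob_norm A"
  unfolding spec_norm_def
proof (rule onorm_le)
  fix x :: "real^'n"
  have "(norm (A *v x))^2 = (\<Sum>i\<in>UNIV. (inner (A$i) x)^2)"
    by (simp add: norm_sq_vec matrix_vector_mult_def inner_vec_def)
  also have "\<dots> \<le> (\<Sum>i\<in>UNIV. (norm (A$i))^2 * (norm x)^2)"
    apply (rule sum_mono)
    using Cauchy_Schwarz_ineq[of "A$i" x for i] by (simp add: power2_norm_eq_inner)
  also have "\<dots> = (frob_norm A * norm x)^2"
    by (simp add: frob_rows power_mult_distrib sum_distrib_right)
  finally show "norm (A *v x) \<le> frob_norm A * norm x"
    by (rule power2_le_imp_le) (simp add: frob_norm_def sum_nonneg)
qed

lemma spec_nonneg: "0 \<le> spec_norm (A::real^'n^'m)"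
  unfolding spec_norm_def by (rule onorm_pos_le) simp

lemma cos_bound: "2 - 2 * cos x \<le> (x::real)^2"
proof -
  have "cos x = 1 - 2 * (sin (x/2))^2"
    using cos_double_sin[of "x/2"] by simp
  moreover have "\<bar>sin (x/2)\<bar> \<le> \<bar>x/2\<bar>" by (rule abs_sin_x_le_abs_x)
  then have "(sin (x/2))^2 \<le> (x/2)^2" by (metis abs_ge_zero power2_abs power_mono)
  ultimately show ?thesis by (simp add: power_divide)
qed

lemma frob_bound:
  fixes M :: "real^'p^'m"
  assumes "\<And>k. (norm (column k M))^2 \<le> (if k \<in> J then (v$k*t)^2 else 0)"
  shows "(frob_norm M)^2 \<le> t^2 * (norm (vrestrict J v))^2"
proof -
  have "(frob_norm M)^2 \<le> (\<Sum>k\<in>UNIV. (if k \<in> J then (v$k*t)^2 else 0))"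
    unfolding frob_cols by (rule sum_mono) (rule assms)
  also have "\<dots> = (\<Sum>k\<in>UNIV. t^2 * (vrestrict J v $ k)^2)"
    by (rule sum.cong) (auto simp: vrestrict_def power_mult_distrib)
  also have "\<dots> = t^2 * (norm (vrestrict J v))^2"
    by (simp add: norm_sq_vec sum_distrib_left)
  finally show ?thesis .
qed

lemma col_restrict: "column k (colrestrict J M) = (if k \<in> J then column k M else 0)"
  by (simp add: colrestrict_def column_def vec_eq_iff)

lemma col_minus: "column k (A - B) = column k A - column k (B::real^'p^'m)"
  by (simp add: column_def vec_eq_iff)

lemma col_mult: "column k (A ** B) = A *v column k B"
  by (simp add: column_def matrix_matrix_mult_def matrix_vector_mult_def vec_eq_iff)

lemma col_Dcurve: "column k (Dcurve D0 W v t) = cos (v$k*t) *\<^sub>R column k D0 + sin (v$k*t) *\<^sub>R column k W"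
  by (simp add: column_def Dcurve_def vec_eq_iff)

lemma col_diff_bound:
  fixes a b :: "real^'m"
  assumes "norm a = 1" "norm b = 1" "inner b a = 0"
  shows "(norm ((cos x *\<^sub>R a + sin x *\<^sub>R b) - a))^2 \<le> x^2"
proof -
  have e1: "(cos x *\<^sub>R a + sin x *\<^sub>R b) - a = (cos x - 1) *\<^sub>R a + sin x *\<^sub>R b"
    by (simp add: algebra_simps)
  have e2: "(norm ((cos x - 1) *\<^sub>R a + sin x *\<^sub>R b))^2 = (cos x - 1)^2 + (sin x)^2"
  proof -
    have aa: "inner a a = 1" "inner b b = 1" "inner a b = 0" using assms
      by (simp_all add: inner_commute flip: power2_norm_eq_inner)
    show ?thesis unfolding power2_norm_eq_inner
      by (simp add: inner_add_left inner_add_right aa inner_commute power2_eq_square)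
  qed
  have e3: "(cos x - 1)^2 + (sin x)^2 = 2 - 2 * cos x"
    using sin_cos_squared_add[of x] by (simp add: power2_eq_square algebra_simps)
  show ?thesis unfolding e1 e2 e3 using cos_bound[of x] .
qed

theorem lemma4:
  fixes D0 W :: "real^'p^'m" and v :: "real^'p" and t :: real and J :: "'p set"
  assumes D0_unit: "\<forall>k. norm (column k D0) = 1"
    and W_orth: "\<forall>k. inner (column k W) (column k D0) = 0"
    and W_unit: "\<forall>k. norm (column k W) = 1"
    and v_unit: "norm v = 1"
    and t_nonneg: "t \<ge> 0"
  shows "(spec_norm (colrestrict J (Dcurve D0 W v t - D0)))^2
           \<le> (frob_norm (colrestrict J (Dcurve D0 W v t - D0)))^2
       \<and> (frob_norm (colrestrict J (Dcurve D0 W v t - D0)))^2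
           \<le> t^2 * (norm (vrestrict J v))^2
       \<and> (spec_norm ((mat 1 - PJ J (Dcurve D0 W v t)) ** colrestrict J D0))^2
           \<le> (frob_norm ((mat 1 - PJ J (Dcurve D0 W v t)) ** colrestrict J D0))^2
       \<and> (frob_norm ((mat 1 - PJ J (Dcurve D0 W v t)) ** colrestrict J D0))^2
           \<le> t^2 * (norm (vrestrict J v))^2"
proof -
  define D where "D = Dcurve D0 W v t"
  define S where "S = {column k D | k. k \<in> J}"
  have cb: "(norm (column k D - column k D0))^2 \<le> (v$k*t)^2" for k
    unfolding D_def col_Dcurve
    by (rule col_diff_bound) (use D0_unit W_unit W_orth in auto)
  have sq: "\<And>A::real^'p^'m. (spec_norm A)^2 \<le> (frob_norm A)^2"
    by (rule power_mono[OF spec_le_frob spec_nonneg])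
  have f1: "(frob_norm (colrestrict J (D - D0)))^2 \<le> t^2 * (norm (vrestrict J v))^2"
    by (rule frob_bound) (simp add: col_restrict col_minus cb)
  have f2: "(frob_norm ((mat 1 - PJ J D) ** colrestrict J D0))^2 \<le> t^2 * (norm (vrestrict J v))^2"
  proof (rule frob_bound)
    fix k
    show "(norm (column k ((mat 1 - PJ J D) ** colrestrict J D0)))^2 \<le> (if k \<in> J then (v$k*t)^2 else 0)"
    proof (cases "k \<in> J")
      case False
      then show ?thesis by (simp add: col_mult col_restrict)
    next
      case True
      let ?y = "column k D0" and ?d = "column k D"
      have dS: "?d \<in> span S" using True unfolding S_def by (auto intro: span_base)
      have lin: "linear (orth_proj S)" by (rule orth_proj_linear)
      have "(mat 1 - PJ J D) *v ?y = ?y - orth_proj S ?y"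
        by (simp add: matrix_vector_mult_diff_rdistrib PJ_def proj_matrix_mult S_def)
      also have "\<dots> = (?y - ?d) - orth_proj S (?y - ?d)"
        using orth_proj_span[OF dS] linear_diff[OF lin, of ?y ?d] by simp
      finally have e: "(mat 1 - PJ J D) *v ?y = (?y - ?d) - orth_proj S (?y - ?d)" .
      have "norm ((mat 1 - PJ J D) *v ?y) \<le> norm (?d - ?y)"
        unfolding e using orth_proj_compl_norm[of "?y - ?d" S] by (simp add: norm_minus_commute)
      then have "(norm ((mat 1 - PJ J D) *v ?y))^2 \<le> (norm (?d - ?y))^2"
        by (simp add: power_mono)
      also have "\<dots> \<le> (v$k*t)^2" using cb[of k] by (simp add: column_def)
      finally show ?thesis using True by (simp add: col_mult col_restrict)
    qed
  qed
  show ?thesis unfolding D_def[symmetric] using sq f1 f2 by blast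
qed

end
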